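(* Consider the following MIMO flat-fading model. Fix integers $l_{\mathrm t},l_{\mathrm r},n\ge 1$ and a known pilot matrix $S=[s_{t,k}]\in\mathbb{C}^{n\times l_{\mathrm t}}$. Let $\vec{\mathbf h}\in\mathbb{C}^{l_{\mathrm r}l_{\mathrm t}}$ (entries $h_{r,t}$) be circularly symmetric complex Gaussian $\mathcal{CN}(\vec\mu_{\vec{\mathbf h}},\Sigma_{\vec{\mathbf h}})$ with $\Sigma_{\vec{\mathbf h}}$ positive definite, let $\mathbf f_\delta\sim\mathcal N(\mu_{\mathbf f_\delta},\sigma_{\mathbf f_\delta}^2)$ be real, let the noise entries $n_{r,k}$ be i.i.d. $\mathcal{CN}(0,1)$, with $\vec{\mathbf h},\mathbf f_\delta,\vec{\mathbf n}$ mutually independent, and observe $\vec{\mathbf y}=\grave X(\mathbf f_\delta)\vec{\mathbf h}+\vec{\mathbf n}$, i.e. $y_{r,k}=e^{j2\pi \mathbf f_\delta (k-1)}\sum_{t=1}^{l_{\mathrm t}}s_{t,k}h_{r,t}+n_{r,k}$. Then for every observation $\vec y\in\mathbb{C}^{nl_{\mathrm r}}$, $$\arg\max_{f_\delta\in\mathbb R} f_{\vec{\mathbf y}|\mathbf f_\delta}(\vec y\,|\,f_\delta)\,f_{\mathbf f_\delta}(f_\delta)=\arg\max_{f_\delta\in\mathbb R} g(\vec y,f_\delta),$$ where $$g(\vec y,f_\delta)=2\,\mathrm{Re}\big[\langle \grave X(f_\delta)^\dagger\vec y,\vec b\rangle\big]+\big(\grave X(f_\delta)^\dagger\vec y\big)^\dagger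 A\big(\grave X(f_\delta)^\dagger\vec y\big)-\tfrac12\sigma_{\mathbf f_\delta}^{-2}\,|f_\delta-\mu_{\mathbf f_\delta}|^2 ,$$ with $A=(\grave S^\dagger\grave S+\Sigma_{\vec{\mathbf h}}^{-1})^{-1}$ (which equals $(\Sigma_{\vec{\mathbf h}}^{-1}+\frac{n\rho}{l_{\mathrm t}}I)^{-1}$ when $S^\dagger S=\frac{n\rho}{l_{\mathrm t}}I_{l_{\mathrm t}}$) and $\vec b=(I-A\grave X(f_\delta)^\dagger\grave X(f_\delta))\vec\mu_{\vec{\mathbf h}}=(I-A\grave S^\dagger\grave S)\vec\mu_{\vec{\mathbf h}}$; $A$ and $\vec b$ do not depend on $f_\delta$. Moreover, the maximum likelihood estimator $\arg\max_{f_\delta} f_{\vec{\mathbf y}|\mathbf f_\delta}(\vec y|f_\delta)$ is obtained by maximizing the same function $g$ with $\sigma_{\mathbf f_\delta}^{-2}$ set to $0$.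
   Context: Notation: $l_{\mathrm t}$ transmit antennas, $l_{\mathrm r}$ receive antennas, $n$ symbol times. $\vec{\mathbf h}$ stacks $h_{r,t}$ (channel from transmit antenna $t$ to receive antenna $r$) with $h_{r,t}$ in position $(r-1)l_{\mathrm t}+t$; $\vec{\mathbf y}$ and $\vec{\mathbf n}$ stack $y_{r,k},n_{r,k}$ with index $(r,k)$ in position $(r-1)n+k$. $\rho=\frac1n\mathrm{Tr}(S^\dagger S)$. $F(f)=\mathrm{diag}\big(e^{j2\pi f(k-1)}\big)_{k=1,\dots,n}$, $X(f)=F(f)S$, $\grave X(f)=I_{l_{\mathrm r}}\otimes X(f)$ (block diagonal with $l_{\mathrm r}$ copies of $X(f)$), $\grave S=I_{l_{\mathrm r}}\otimes S$. $f_{\vec{\mathbf y}|\mathbf f_\delta}$ is the conditional density of $\vec{\mathbf y}$ given $\mathbf f_\delta$ and $f_{\mathbf f_\delta}$ the Gaussian prior density of $\mathbf f_\delta$. $\langle u,v\rangle=v^\dagger u$; $\dagger$ denotes conjugate transpose. *)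

theory Defs
  imports "Jordan_Normal_Form.Schur_Decomposition" "Jordan_Normal_Form.Gauss_Jordan_Elimination"
begin

definition minv :: "complex mat \<Rightarrow> complex mat" where
  "minv M = the (mat_inverse M)"

definition herm_pd :: "nat \<Rightarrow> complex mat \<Rightarrow> bool" where
  "herm_pd d M \<longleftrightarrow> M \<in> carrier_mat d d \<and> mat_adjoint M = M \<and>
     (\<forall>v \<in> carrier_vec d. v \<noteq> 0\<^sub>v d \<longrightarrow> 0 < Re ((M *\<^sub>v v) \<bullet>c v))"

(* F(f) = diag(exp(j 2 pi f (k-1))), k = 1..n  (0-based index k here) *)
definition Fmat :: "nat \<Rightarrow> real \<Rightarrow> complex mat" where
  "Fmat n f = mat n n (\<lambda>(i,j). if i = j then cis (2 * pi * f * real i) else 0)"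

definition Xmat :: "complex mat \<Rightarrow> real \<Rightarrow> complex mat" where
  "Xmat S f = Fmat (dim_row S) f * S"

(* I_{l} \<otimes> M : block diagonal with l copies of M *)
definition blkdiag :: "nat \<Rightarrow> complex mat \<Rightarrow> complex mat" where
  "blkdiag l M = mat (l * dim_row M) (l * dim_col M)
     (\<lambda>(i,j). if i div dim_row M = j div dim_col M
              then M $$ (i mod dim_row M, j mod dim_col M) else 0)"

definition cn_density :: "complex vec \<Rightarrow> complex mat \<Rightarrow> complex vec \<Rightarrow> real" where
  "cn_density m C y = exp (- Re ((minv C *\<^sub>v (y - m)) \<bullet>c (y - m)))
                      / (pi ^ dim_vec y * Re (det C))"

(* conditional density of y given f_delta: under the model y = Xgrave(f) h + n with
   h ~ CN(mu_h, Sigma_h), n ~ CN(0, I) independent, y | f ~ CN(Xgrave mu_h, Xgrave Sigma Xgrave^H + I) *)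
definition lik :: "nat \<Rightarrow> complex mat \<Rightarrow> complex vec \<Rightarrow> complex mat \<Rightarrow> complex vec \<Rightarrow> real \<Rightarrow> real" where
  "lik lr S muh Sig y f =
     (let Xg = blkdiag lr (Xmat S f) in
      cn_density (Xg *\<^sub>v muh) (Xg * Sig * mat_adjoint Xg + 1\<^sub>m (lr * dim_row S)) y)"

definition Amat :: "nat \<Rightarrow> complex mat \<Rightarrow> complex mat \<Rightarrow> complex mat" where
  "Amat lr S Sig = minv (mat_adjoint (blkdiag lr S) * blkdiag lr S + minv Sig)"

definition bvec :: "nat \<Rightarrow> complex mat \<Rightarrow> complex vec \<Rightarrow> complex mat \<Rightarrow> real \<Rightarrow> complex vec" where
  "bvec lr S muh Sig f =
     (let Xg = blkdiag lr (Xmat S f) in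
      (1\<^sub>m (lr * dim_col S) - Amat lr S Sig * (mat_adjoint Xg * Xg)) *\<^sub>v muh)"

(* g(y, f) with tau playing the role of sigma_f^{-2} *)
definition gfun :: "nat \<Rightarrow> complex mat \<Rightarrow> complex vec \<Rightarrow> complex mat \<Rightarrow> real \<Rightarrow> real
                    \<Rightarrow> complex vec \<Rightarrow> real \<Rightarrow> real" where
  "gfun lr S muh Sig tau muf y f =
     (let z = mat_adjoint (blkdiag lr (Xmat S f)) *\<^sub>v y in
      2 * Re (z \<bullet>c bvec lr S muh Sig f) + Re ((Amat lr S Sig *\<^sub>v z) \<bullet>c z)
      - tau / 2 * \<bar>f - muf\<bar>\<^sup>2)"

definition normal_pdf :: "real \<Rightarrow> real \<Rightarrow> real \<Rightarrow> real" where
  "normal_pdf mu sigma x = 1 / sqrt (2 * pi * sigma\<^sup>2) * exp (-(x - mu)\<^sup>2 / (2 * sigma\<^sup>2))"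

definition argmax_set :: "(real \<Rightarrow> real) \<Rightarrow> real set" where
  "argmax_set h = {x. \<forall>z. h z \<le> h x}"

end

theory Submission
  imports Defs
begin


lemma adj_dims[simp]: fixes A B :: "complex mat" shows "dim_row (mat_adjoint A) = dim_col A" "dim_col (mat_adjoint A) = dim_row A"
  unfolding mat_adjoint_def by (auto simp: mat_of_rows_def)

lemma adj_index[simp]: fixes A B :: "complex mat" shows "i < dim_col A \<Longrightarrow> j < dim_row A \<Longrightarrow> mat_adjoint A $$ (i,j) = cnj (A $$ (j,i))"
  unfolding mat_adjoint_def by (auto simp: mat_of_rows_def)

lemma adj_alt: fixes A B :: "complex mat" shows "mat_adjoint A = mat (dim_col A) (dim_row A) (\<lambda>(i,j). cnj (A $$ (j,i)))"
  by (rule eq_matI, auto)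

lemma adj_carrier[simp]: fixes A B :: "complex mat" shows "A \<in> carrier_mat m n \<Longrightarrow> mat_adjoint A \<in> carrier_mat n m"
  by (intro carrier_matI, simp_all add: adj_dims carrier_matD)

lemma adj_adj[simp]: fixes A B :: "complex mat" shows "mat_adjoint (mat_adjoint A) = A"
  unfolding adj_alt by (rule eq_matI, auto simp: )

lemma adj_mult: fixes A B :: "complex mat" shows "dim_col A = dim_row B \<Longrightarrow> mat_adjoint (A * B) = mat_adjoint B * mat_adjoint A"
  unfolding adj_alt by (rule eq_matI, auto simp:  scalar_prod_def mult.commute)

lemma adj_add: fixes A B :: "complex mat" shows "A \<in> carrier_mat m n \<Longrightarrow> B \<in> carrier_mat m n \<Longrightarrow> mat_adjoint (A + B) = mat_adjoint A + mat_adjoint B"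
  unfolding adj_alt by (rule eq_matI, auto simp: )

lemma adj_minus: fixes A B :: "complex mat" shows "A \<in> carrier_mat m n \<Longrightarrow> B \<in> carrier_mat m n \<Longrightarrow> mat_adjoint (A - B) = mat_adjoint A - mat_adjoint B"
  unfolding adj_alt by (rule eq_matI, auto simp: )

lemma adj_one[simp]: fixes A B :: "complex mat" shows "mat_adjoint (1\<^sub>m n :: complex mat) = 1\<^sub>m n"
  unfolding adj_alt by (rule eq_matI, auto simp: )

lemma cscalar_index: fixes v w u :: "complex vec" shows "dim_vec v = dim_vec w \<Longrightarrow> v \<bullet>c w = (\<Sum>i<dim_vec v. v $ i * cnj (w $ i))"
  by (auto simp: scalar_prod_def atLeast0LessThan)

lemma cscalar_swap: fixes v w u :: "complex vec" shows "dim_vec v = dim_vec w \<Longrightarrow> v \<bullet>c w = cnj (w \<bullet>c v)"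
  by (auto simp: cscalar_index mult.commute)

lemma cscalar_adj: fixes v w u :: "complex vec" shows "A \<in> carrier_mat m n \<Longrightarrow> u \<in> carrier_vec n \<Longrightarrow> w \<in> carrier_vec m \<Longrightarrow>
   (A *\<^sub>v u) \<bullet>c w = u \<bullet>c (mat_adjoint A *\<^sub>v w)"
proof -
  assume A: "A \<in> carrier_mat m n" and u: "u \<in> carrier_vec n" and w: "w \<in> carrier_vec m"
  have "(A *\<^sub>v u) \<bullet>c w = (\<Sum>i<m. (\<Sum>j<n. A $$ (i,j) * u $ j) * cnj (w $ i))"
    using A u w by (subst cscalar_index, auto simp: mult_mat_vec_def scalar_prod_def atLeast0LessThan)
  also have "\<dots> = (\<Sum>i<m. \<Sum>j<n. A $$ (i,j) * u $ j * cnj (w $ i))"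
    by (simp add: sum_distrib_right)
  also have "\<dots> = (\<Sum>j<n. \<Sum>i<m. A $$ (i,j) * u $ j * cnj (w $ i))"
    by (rule sum.swap)
  also have "\<dots> = (\<Sum>j<n. u $ j * cnj (\<Sum>i<m. cnj (A $$ (i,j)) * w $ i))"
    by (simp add: sum_distrib_left mult_ac)
  also have "\<dots> = u \<bullet>c (mat_adjoint A *\<^sub>v w)"
    using A u w by (subst cscalar_index, auto simp: mult_mat_vec_def scalar_prod_def atLeast0LessThan)
  finally show ?thesis .
qed


lemma minv_props: fixes A :: "complex mat"
  assumes A: "A \<in> carrier_mat n n" and d: "det A \<noteq> 0"
  shows "minv A \<in> carrier_mat n n \<and> A * minv A = 1\<^sub>m n \<and> minv A * A = 1\<^sub>m n"
proof (cases "mat_inverse A")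
  case None
  from mat_inverse(1)[OF A None, of undefined] det_non_zero_imp_unit[OF A d, of undefined] show ?thesis by blast
next
  case (Some B)
  from mat_inverse(2)[OF A Some] show ?thesis unfolding minv_def Some by auto
qed

lemma minv_unique: fixes A B :: "complex mat"
  assumes A: "A \<in> carrier_mat n n" and B: "B \<in> carrier_mat n n" and AB: "A * B = 1\<^sub>m n"
  shows "minv A = B"
proof -
  have BA: "B * A = 1\<^sub>m n" by (rule mat_mult_left_right_inverse[OF A B AB])
  have d: "det A \<noteq> 0"
  proof
    assume "det A = 0"
    then have "det (A * B) = 0" using det_mult[OF A B] by simp
    then show False using AB by simp
  qed
  from minv_props[OF A d] have C: "minv A \<in> carrier_mat n n" and BC: "minv A * A = 1\<^sub>m n" by auto
  have "minv A = minv A * (A * B)" using C AB by simp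
  also have "\<dots> = (minv A * A) * B" using C A B by (simp add: assoc_mult_mat)
  also have "\<dots> = B" using BC B by simp
  finally show ?thesis .
qed

lemma blkdiag_dims[simp]: "dim_row (blkdiag l M) = l * dim_row M" "dim_col (blkdiag l M) = l * dim_col M"
  unfolding blkdiag_def by auto

lemma blkdiag_index: "i < l * dim_row M \<Longrightarrow> j < l * dim_col M \<Longrightarrow> blkdiag l M $$ (i,j) =
   (if i div dim_row M = j div dim_col M then M $$ (i mod dim_row M, j mod dim_col M) else 0)"
  unfolding blkdiag_def by auto

lemma blkdiag_carrier: "M \<in> carrier_mat r c \<Longrightarrow> blkdiag l M \<in> carrier_mat (l*r) (l*c)"
  by auto

lemma block_sum: fixes g :: "nat \<Rightarrow> complex"
  shows "(\<Sum>j<l*m. g j) = (\<Sum>b<l. \<Sum>j'<m. g (b*m + j'))"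
proof -
  have "(\<Sum>j<l*m. g j) = (\<Sum>b<l. sum g {b*m..<b*m+m})"
    by (rule sum.nat_group[symmetric])
  also have "\<dots> = (\<Sum>b<l. \<Sum>j'<m. g (b*m + j'))"
  proof (rule sum.cong[OF refl])
    fix b
    have "sum g {b*m..<b*m+m} = sum g {0+b*m..<m+b*m}" by (simp add: add.commute)
    also have "\<dots> = (\<Sum>j'=0..<m. g (j' + b*m))" by (rule sum.shift_bounds_nat_ivl)
    finally show "sum g {b*m..<b*m+m} = (\<Sum>j'<m. g (b*m + j'))" by (simp add: atLeast0LessThan add.commute)
  qed
  finally show ?thesis .
qed

lemma blkdiag_mult: fixes A B :: "complex mat"
  assumes AB: "dim_col A = dim_row B"
  shows "blkdiag l A * blkdiag l B = blkdiag l (A * B)"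
proof (rule eq_matI)
  fix i k assume i: "i < dim_row (blkdiag l (A * B))" and k: "k < dim_col (blkdiag l (A * B))"
  define r where "r = dim_row A"
  define m where "m = dim_col A"
  define c where "c = dim_col B"
  have i': "i < l * r" and k': "k < l * c" using i k by (auto simp: r_def c_def)
  have r0: "r > 0" using i' by (cases r, auto)
  have c0: "c > 0" using k' by (cases c, auto)
  have ib: "i div r < l" using i' r0 by (simp add: div_less_iff_less_mult mult.commute)
  have "(blkdiag l A * blkdiag l B) $$ (i,k) = (\<Sum>j<l*m. blkdiag l A $$ (i,j) * blkdiag l B $$ (j,k))"
    using i' k' AB by (auto simp: r_def m_def c_def scalar_prod_def atLeast0LessThan)
  also have "\<dots> = (\<Sum>b<l. \<Sum>j'<m. blkdiag l A $$ (i,b*m+j') * blkdiag l B $$ (b*m+j',k))"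
    by (rule block_sum)
  also have "\<dots> = (\<Sum>b<l. if b = i div r then (if i div r = k div c then (\<Sum>j'<m. A $$ (i mod r, j') * B $$ (j', k mod c)) else 0) else 0)"
  proof (rule sum.cong[OF refl])
    fix b assume b: "b \<in> {..<l}"
    show "(\<Sum>j'<m. blkdiag l A $$ (i,b*m+j') * blkdiag l B $$ (b*m+j',k)) = (if b = i div r then (if i div r = k div c then (\<Sum>j'<m. A $$ (i mod r, j') * B $$ (j', k mod c)) else 0) else 0)"
    proof (rule trans[OF sum.cong[OF refl]])
      fix j' assume j': "j' \<in> {..<m}"
      have jl: "b*m+j' < l*m" using b j'
      proof -
        have "(b+1)*m \<le> l*m" using b by (intro mult_le_mono1) auto
        moreover have "b*m+j' < (b+1)*m" using j' by simp
        ultimately show ?thesis by linarith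
      qed
      have d: "(b*m+j') div m = b" "(b*m+j') mod m = j'" using j' by auto
      show "blkdiag l A $$ (i,b*m+j') * blkdiag l B $$ (b*m+j',k) =
         (if b = i div r \<and> i div r = k div c then A $$ (i mod r, j') * B $$ (j', k mod c) else 0)"
        using i' k' jl d AB by (auto simp: blkdiag_index r_def m_def c_def)
    qed auto
  qed
  also have "\<dots> = (if i div r = k div c then (\<Sum>j'<m. A $$ (i mod r, j') * B $$ (j', k mod c)) else 0)"
    using ib by (simp add: sum.delta')
  also have "\<dots> = blkdiag l (A * B) $$ (i,k)"
  proof -
    have "i mod r < r" "k mod c < c" using r0 c0 by auto
    then show ?thesis
      using i' k' AB by (auto simp: blkdiag_index r_def m_def c_def scalar_prod_def atLeast0LessThan)
  qed
  finally show "(blkdiag l A * blkdiag l B) $$ (i,k) = blkdiag l (A * B) $$ (i,k)" .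
qed (use AB in auto)

lemma blkdiag_adj: fixes A :: "complex mat"
  shows "mat_adjoint (blkdiag l A) = blkdiag l (mat_adjoint A)"
proof (rule eq_matI)
  fix i j assume i: "i < dim_row (blkdiag l (mat_adjoint A))" and j: "j < dim_col (blkdiag l (mat_adjoint A))"
  have i': "i < l * dim_col A" and j': "j < l * dim_row A" using i j by auto
  have c0: "dim_col A > 0" using i' by (cases "dim_col A", auto)
  have r0: "dim_row A > 0" using j' by (cases "dim_row A", auto)
  show "mat_adjoint (blkdiag l A) $$ (i, j) = blkdiag l (mat_adjoint A) $$ (i, j)"
    using i' j' c0 r0 by (auto simp: blkdiag_index)
qed auto

lemma blkdiag_one: "blkdiag l (1\<^sub>m m :: complex mat) = 1\<^sub>m (l * m)"
proof (rule eq_matI)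
  fix i j assume i: "i < dim_row (1\<^sub>m (l * m) :: complex mat)" and j: "j < dim_col (1\<^sub>m (l * m) :: complex mat)"
  have m0: "m > 0" using i by (cases m, auto)
  have "(i div m = j div m \<and> i mod m = j mod m) = (i = j)"
    by (metis div_mult_mod_eq)
  then show "blkdiag l (1\<^sub>m m :: complex mat) $$ (i, j) = (1\<^sub>m (l * m) :: complex mat) $$ (i, j)"
    using i j m0 by (auto simp: blkdiag_index)
qed auto

lemma blkdiag_smult: "blkdiag l (a \<cdot>\<^sub>m (M :: complex mat)) = a \<cdot>\<^sub>m blkdiag l M"
proof (rule eq_matI)
  fix i j assume i: "i < dim_row (a \<cdot>\<^sub>m blkdiag l M)" and j: "j < dim_col (a \<cdot>\<^sub>m blkdiag l M)"
  have c0: "dim_col M > 0" using j by (cases "dim_col M", auto)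
  have r0: "dim_row M > 0" using i by (cases "dim_row M", auto)
  show "blkdiag l (a \<cdot>\<^sub>m M) $$ (i, j) = (a \<cdot>\<^sub>m blkdiag l M) $$ (i, j)"
    using i j c0 r0 by (auto simp: blkdiag_index)
qed auto

lemma Fmat_carrier[simp]: "Fmat n f \<in> carrier_mat n n"
  unfolding Fmat_def by auto

lemma Fmat_unitary: "mat_adjoint (Fmat n f) * Fmat n f = 1\<^sub>m n" "Fmat n f * mat_adjoint (Fmat n f) = 1\<^sub>m n"
proof -
  have cc: "cnj (cis x) * cis x = 1" "cis x * cnj (cis x) = 1" for x
    by (simp_all add: cis_cnj cis_mult)
  show "mat_adjoint (Fmat n f) * Fmat n f = 1\<^sub>m n"
  proof (rule eq_matI)
    fix i j assume i: "i < dim_row (1\<^sub>m n :: complex mat)" and j: "j < dim_col (1\<^sub>m n :: complex mat)"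
    have "(mat_adjoint (Fmat n f) * Fmat n f) $$ (i,j) = (\<Sum>k\<in>{0..<n}. (if k = i then cnj (cis (2 * pi * f * real i)) else 0) * (if k = j then cis (2 * pi * f * real j) else 0))"
      using i j by (auto simp: Fmat_def scalar_prod_def intro!: sum.cong)
    also have "\<dots> = (\<Sum>k\<in>{0..<n}. if k = i then (if i = j then 1 else 0) else 0)"
      by (rule sum.cong, auto simp: cc)
    also have "\<dots> = (1\<^sub>m n :: complex mat) $$ (i,j)"
      using i j by (subst sum.delta, auto)
    finally show "(mat_adjoint (Fmat n f) * Fmat n f) $$ (i,j) = (1\<^sub>m n :: complex mat) $$ (i,j)" .
  qed (auto simp: Fmat_def)
  show "Fmat n f * mat_adjoint (Fmat n f) = 1\<^sub>m n"
  proof (rule eq_matI)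
    fix i j assume i: "i < dim_row (1\<^sub>m n :: complex mat)" and j: "j < dim_col (1\<^sub>m n :: complex mat)"
    have "(Fmat n f * mat_adjoint (Fmat n f)) $$ (i,j) = (\<Sum>k\<in>{0..<n}. (if i = k then cis (2 * pi * f * real i) else 0) * (if j = k then cnj (cis (2 * pi * f * real j)) else 0))"
      using i j by (auto simp: Fmat_def scalar_prod_def intro!: sum.cong)
    also have "\<dots> = (\<Sum>k\<in>{0..<n}. if k = i then (if i = j then 1 else 0) else 0)"
      by (rule sum.cong, auto simp: cc)
    also have "\<dots> = (1\<^sub>m n :: complex mat) $$ (i,j)"
      using i j by (subst sum.delta, auto)
    finally show "(Fmat n f * mat_adjoint (Fmat n f)) $$ (i,j) = (1\<^sub>m n :: complex mat) $$ (i,j)" .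
  qed (auto simp: Fmat_def)
qed

lemma herm_cscalar_real: fixes M :: "complex mat"
  assumes M: "M \<in> carrier_mat d d" and h: "mat_adjoint M = M" and v: "v \<in> carrier_vec d"
  shows "Im ((M *\<^sub>v v) \<bullet>c v) = 0"
proof -
  have "(M *\<^sub>v v) \<bullet>c v = v \<bullet>c (M *\<^sub>v v)"
    using cscalar_adj[OF M v v] h by simp
  also have "\<dots> = cnj ((M *\<^sub>v v) \<bullet>c v)"
    using M v by (subst cscalar_swap, auto)
  finally show ?thesis by (metis Reals_cnj_iff complex_is_Real_iff)
qed

lemma prod_list_pos: fixes as :: "complex list"
  assumes "\<And>a. a \<in> set as \<Longrightarrow> Im a = 0 \<and> Re a > 0"
  shows "Im (prod_list as) = 0 \<and> Re (prod_list as) > 0"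
  using assms by (induct as, auto)

lemma det_herm_pd_pos: fixes M :: "complex mat"
  assumes pd: "herm_pd d M"
  shows "Re (det M) > 0"
proof -
  from pd have M: "M \<in> carrier_mat d d" and h: "mat_adjoint M = M"
    and pos: "\<And>v. v \<in> carrier_vec d \<Longrightarrow> v \<noteq> 0\<^sub>v d \<Longrightarrow> 0 < Re ((M *\<^sub>v v) \<bullet>c v)"
    unfolding herm_pd_def by auto
  obtain as where cp: "char_poly M = (\<Prod>a\<leftarrow>as. [:- a, 1:])" and len: "length as = d"
    using char_poly_factorized[OF M] by blast
  have ev: "Im a = 0 \<and> Re a > 0" if a: "a \<in> set as" for a
  proof -
    have "poly (char_poly M) a = 0" unfolding cp using a
      by (simp add: poly_prod_list prod_list_zero_iff)
    then have "eigenvalue M a" using eigenvalue_root_char_poly[OF M] by simp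
    then obtain v where v: "v \<in> carrier_vec d" "v \<noteq> 0\<^sub>v d" "M *\<^sub>v v = a \<cdot>\<^sub>v v"
      unfolding eigenvalue_def eigenvector_def using M by auto
    define s where "s = v \<bullet>c v"
    have s: "Im s = 0" "Re s > 0" using conjugate_square_greater_0_vec[of v d] v(1,2)
      unfolding s_def by (auto simp: less_complex_def)
    have "(M *\<^sub>v v) \<bullet>c v = a * s" unfolding s_def v(3) using v(1) by simp
    moreover have "Im ((M *\<^sub>v v) \<bullet>c v) = 0" by (rule herm_cscalar_real[OF M h v(1)])
    moreover have "Re ((M *\<^sub>v v) \<bullet>c v) > 0" by (rule pos[OF v(1,2)])
    ultimately have "Im (a * s) = 0" "Re (a * s) > 0" by auto
    then show ?thesis using s by (auto simp: zero_less_mult_iff)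
  qed
  have "M + 0 \<cdot>\<^sub>m 1\<^sub>m d = M" using M by (intro eq_matI, auto)
  then have "poly (char_poly M) 0 = det (- M)"
    using char_poly_matrix[OF M, of 0] M by (simp add: char_matrix_def)
  also have "- M = (-1) \<cdot>\<^sub>m M" by (rule eq_matI, auto)
  also have "det \<dots> = (-1) ^ d * det M" using M by simp
  finally have d1: "poly (char_poly M) 0 = (-1) ^ d * det M" .
  have "poly (char_poly M) 0 = (\<Prod>a\<leftarrow>as. - a)" unfolding cp by (simp add: poly_prod_list o_def)
  also have "\<dots> = (-1) ^ d * prod_list as" using len by (induct as arbitrary: d, auto)
  finally have "det M = prod_list as" using d1 by simp
  then show ?thesis using prod_list_pos[of as] ev by auto
qed

lemma herm_pd_det_nz: "herm_pd d M \<Longrightarrow> det M \<noteq> 0"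
  using det_herm_pd_pos by fastforce

lemma minv_herm: fixes M :: "complex mat"
  assumes M: "M \<in> carrier_mat d d" and h: "mat_adjoint M = M" and dM: "det M \<noteq> 0"
  shows "mat_adjoint (minv M) = minv M"
proof -
  from minv_props[OF M dM] have B: "minv M \<in> carrier_mat d d" and BM: "minv M * M = 1\<^sub>m d" by auto
  have "mat_adjoint (minv M * M) = 1\<^sub>m d" using BM by simp
  then have "M * mat_adjoint (minv M) = 1\<^sub>m d" using adj_mult[of "minv M" M] B M h by simp
  then have "minv M = mat_adjoint (minv M)" by (rule minv_unique[OF M adj_carrier[OF B]])
  then show ?thesis by simp
qed

lemma cs_real_nonneg: fixes a :: "complex vec" shows "Re (a \<bullet>c a) \<ge> 0"
  using conjugate_square_ge_0_vec[of a] unfolding less_eq_complex_def by simp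

lemma cs_minus_left: fixes a b c :: "complex vec"
  assumes "a \<in> carrier_vec k" "b \<in> carrier_vec k" "c \<in> carrier_vec k"
  shows "(a - b) \<bullet>c c = a \<bullet>c c - b \<bullet>c c"
  using minus_scalar_prod_distrib[of a k b "conjugate c"] assms by auto

lemma cs_minus_right: fixes a b c :: "complex vec"
  assumes "a \<in> carrier_vec k" "b \<in> carrier_vec k" "c \<in> carrier_vec k"
  shows "c \<bullet>c (a - b) = c \<bullet>c a - c \<bullet>c b"
proof -
  have "conjugate (a - b) = conjugate a - conjugate b" by (rule eq_vecI) (use assms in auto)
  then show ?thesis using scalar_prod_minus_distrib[of c k "conjugate a" "conjugate b"] assms by auto
qed




lemma mv_carrier[simp]: "dim_row M = k \<Longrightarrow> M *\<^sub>v v \<in> carrier_vec k"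
  by (intro carrier_vecI) simp

lemma massoc: fixes A B C :: "complex mat"
  shows "dim_col A = dim_row B \<Longrightarrow> dim_col B = dim_row C \<Longrightarrow> A * B * C = A * (B * C)"
  by (rule assoc_mult_mat[of A "dim_row A" "dim_col A" B "dim_col B" C "dim_col C"], auto)

lemma mone_l: fixes A :: "complex mat" shows "dim_row A = k \<Longrightarrow> 1\<^sub>m k * A = A"
  by (rule left_mult_one_mat[of A k "dim_col A"], intro carrier_matI, auto)

lemma mone_r: fixes A :: "complex mat" shows "dim_col A = k \<Longrightarrow> A * 1\<^sub>m k = A"
  by (rule right_mult_one_mat[of A "dim_row A" k], intro carrier_matI, auto)

lemma mdistr_l: fixes A B C :: "complex mat"
  shows "dim_col A = dim_row B \<Longrightarrow> dim_row B = dim_row C \<Longrightarrow> dim_col B = dim_col C \<Longrightarrow> A * (B + C) = A * B + A * C"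
  by (rule mult_add_distrib_mat[of A "dim_row A" "dim_col A" B "dim_col B"], auto)

lemma mdistr_r: fixes A B C :: "complex mat"
  shows "dim_col A = dim_row C \<Longrightarrow> dim_row A = dim_row B \<Longrightarrow> dim_col A = dim_col B \<Longrightarrow> (A + B) * C = A * C + B * C"
  by (rule add_mult_distrib_mat[of A "dim_row A" "dim_col A" B C "dim_col C"], auto)

lemma mdistr_minus_l: fixes A B C :: "complex mat"
  shows "dim_col A = dim_row B \<Longrightarrow> dim_row B = dim_row C \<Longrightarrow> dim_col B = dim_col C \<Longrightarrow> A * (B - C) = A * B - A * C"
  by (rule mult_minus_distrib_mat[of A "dim_row A" "dim_col A" B "dim_col B"], auto)

lemma mvassoc: fixes A B :: "complex mat"
  shows "dim_col A = dim_row B \<Longrightarrow> dim_col B = dim_vec v \<Longrightarrow> (A * B) *\<^sub>v v = A *\<^sub>v (B *\<^sub>v v)"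
  by (rule assoc_mult_mat_vec[of A "dim_row A" "dim_col A" B "dim_col B"], auto)

lemma mvone: fixes v :: "complex vec" shows "dim_vec v = k \<Longrightarrow> 1\<^sub>m k *\<^sub>v v = v"
  by (rule one_mult_mat_vec, auto)

locale mimo =
  fixes lt lr n :: nat and S Sig :: "complex mat" and muh y :: "complex vec"
  assumes lt: "lt \<ge> 1" and lr: "lr \<ge> 1" and nn: "n \<ge> 1"
    and S: "S \<in> carrier_mat n lt" and Sigpd: "herm_pd (lr * lt) Sig"
    and muh: "muh \<in> carrier_vec (lr * lt)" and y: "y \<in> carrier_vec (lr * n)"
begin

definition "Sg = blkdiag lr S"
definition "D f = blkdiag lr (Fmat n f)"
definition "Xg f = blkdiag lr (Xmat S f)"
definition "G = mat_adjoint Sg * Sg"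
definition "Si = minv Sig"
definition "P = G + Si"
definition "A = minv P"

lemma Sg_carrier[simp]: "Sg \<in> carrier_mat (lr*n) (lr*lt)"
  unfolding Sg_def using S by auto

lemma D_carrier[simp]: "D f \<in> carrier_mat (lr*n) (lr*n)"
  unfolding D_def by (auto simp: Fmat_def)

lemma Sg_dims[simp]: "dim_row Sg = lr*n" "dim_col Sg = lr*lt" by (rule carrier_matD[OF Sg_carrier])+
lemma D_dims[simp]: "dim_row (D f) = lr*n" "dim_col (D f) = lr*n" by (rule carrier_matD[OF D_carrier])+

lemma D_unitary: "mat_adjoint (D f) * D f = 1\<^sub>m (lr*n)" "D f * mat_adjoint (D f) = 1\<^sub>m (lr*n)"
  unfolding D_def blkdiag_adj
  by (subst blkdiag_mult, simp add: Fmat_def, simp add: Fmat_unitary blkdiag_one)+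

lemma Xg_eq: "Xg f = D f * Sg"
  unfolding Xg_def D_def Sg_def Xmat_def using S
  by (subst blkdiag_mult, auto simp: Fmat_def)

lemma Xg_carrier[simp]: "Xg f \<in> carrier_mat (lr*n) (lr*lt)"
  unfolding Xg_eq by (rule mult_carrier_mat[OF D_carrier Sg_carrier])

lemma Xg_dims[simp]: "dim_row (Xg f) = lr*n" "dim_col (Xg f) = lr*lt" by (rule carrier_matD[OF Xg_carrier])+

lemma G_carrier[simp]: "G \<in> carrier_mat (lr*lt) (lr*lt)"
  unfolding G_def by (rule mult_carrier_mat[OF adj_carrier[OF Sg_carrier] Sg_carrier])

lemma G_dims[simp]: "dim_row G = lr*lt" "dim_col G = lr*lt" by (rule carrier_matD[OF G_carrier])+

lemma G_herm: "mat_adjoint G = G"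
  unfolding G_def using Sg_carrier by (subst adj_mult, auto)

lemma XX: "mat_adjoint (Xg f) * Xg f = G"
proof -
  have Da: "mat_adjoint (D f) \<in> carrier_mat (lr*n) (lr*n)" by simp
  have Sa: "mat_adjoint Sg \<in> carrier_mat (lr*lt) (lr*n)" by simp
  have "mat_adjoint (Xg f) * Xg f = (mat_adjoint Sg * mat_adjoint (D f)) * (D f * Sg)"
    unfolding Xg_eq by (subst adj_mult, auto)
  also have "\<dots> = mat_adjoint Sg * (mat_adjoint (D f) * (D f * Sg))"
    using Sa Da by (subst assoc_mult_mat[of _ "lr*lt" "lr*n" _ "lr*n"], auto)
  also have "mat_adjoint (D f) * (D f * Sg) = (mat_adjoint (D f) * D f) * Sg"
    using Da by (subst assoc_mult_mat[of _ "lr*n" "lr*n" _ "lr*n"], auto)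
  also have "\<dots> = Sg" unfolding D_unitary by simp
  finally show ?thesis unfolding G_def .
qed

lemma Sig_carrier[simp]: "Sig \<in> carrier_mat (lr*lt) (lr*lt)" using Sigpd unfolding herm_pd_def by auto
lemma Sig_dims[simp]: "dim_row Sig = lr*lt" "dim_col Sig = lr*lt" by (rule carrier_matD[OF Sig_carrier])+
lemma Sig_herm: "mat_adjoint Sig = Sig" using Sigpd unfolding herm_pd_def by auto
lemma Sig_pos: "v \<in> carrier_vec (lr*lt) \<Longrightarrow> v \<noteq> 0\<^sub>v (lr*lt) \<Longrightarrow> 0 < Re ((Sig *\<^sub>v v) \<bullet>c v)"
  using Sigpd unfolding herm_pd_def by auto
lemma Sig_nonneg: "v \<in> carrier_vec (lr*lt) \<Longrightarrow> 0 \<le> Re ((Sig *\<^sub>v v) \<bullet>c v)"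
  using Sig_pos[of v] by (cases "v = 0\<^sub>v (lr*lt)", auto simp: scalar_prod_def)
lemma Sig_det: "det Sig \<noteq> 0" by (rule herm_pd_det_nz[OF Sigpd])

lemma Si_props: "Si \<in> carrier_mat (lr*lt) (lr*lt)" "Sig * Si = 1\<^sub>m (lr*lt)" "Si * Sig = 1\<^sub>m (lr*lt)"
  using minv_props[OF Sig_carrier Sig_det] unfolding Si_def by auto
lemma Si_carrier[simp]: "Si \<in> carrier_mat (lr*lt) (lr*lt)" by (rule Si_props(1))
lemma Si_dims[simp]: "dim_row Si = lr*lt" "dim_col Si = lr*lt" by (rule carrier_matD[OF Si_carrier])+
lemma Si_herm: "mat_adjoint Si = Si"
  unfolding Si_def by (rule minv_herm[OF Sig_carrier Sig_herm Sig_det])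

lemma P_carrier[simp]: "P \<in> carrier_mat (lr*lt) (lr*lt)" unfolding P_def by simp
lemma P_dims[simp]: "dim_row P = lr*lt" "dim_col P = lr*lt" by (rule carrier_matD[OF P_carrier])+

lemma P_pd: "herm_pd (lr*lt) P"
  unfolding herm_pd_def
proof (intro conjI ballI impI)
  show "P \<in> carrier_mat (lr*lt) (lr*lt)" by simp
  show "mat_adjoint P = P" unfolding P_def
    by (subst adj_add[of _ "lr*lt" "lr*lt"], auto simp: G_herm Si_herm)
  fix v :: "complex vec" assume v: "v \<in> carrier_vec (lr*lt)" and v0: "v \<noteq> 0\<^sub>v (lr*lt)"
  have "P *\<^sub>v v = G *\<^sub>v v + Si *\<^sub>v v" unfolding P_def
    using v by (subst add_mult_distrib_mat_vec[of _ "lr*lt" "lr*lt"], auto)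
  then have "(P *\<^sub>v v) \<bullet>c v = (G *\<^sub>v v) \<bullet>c v + (Si *\<^sub>v v) \<bullet>c v"
    using v add_scalar_prod_distrib[of "G *\<^sub>v v" "lr*lt" "Si *\<^sub>v v" "conjugate v"]
      mult_mat_vec_carrier[OF G_carrier v] mult_mat_vec_carrier[OF Si_carrier v] by simp
  moreover have "(G *\<^sub>v v) \<bullet>c v = (Sg *\<^sub>v v) \<bullet>c (Sg *\<^sub>v v)"
  proof -
    have "G *\<^sub>v v = mat_adjoint Sg *\<^sub>v (Sg *\<^sub>v v)" unfolding G_def
      using v by (subst assoc_mult_mat_vec[of _ "lr*lt" "lr*n" _ "lr*lt"], auto)
    then show ?thesis using cscalar_adj[of "mat_adjoint Sg" "lr*lt" "lr*n" "Sg *\<^sub>v v" v] v by simp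
  qed
  moreover have "0 < Re ((Si *\<^sub>v v) \<bullet>c v)"
  proof -
    define w where "w = Si *\<^sub>v v"
    have w: "w \<in> carrier_vec (lr*lt)" unfolding w_def using v by simp
    have vw: "Sig *\<^sub>v w = v" unfolding w_def
      using v by (subst assoc_mult_mat_vec[symmetric, of _ "lr*lt" "lr*lt" _ "lr*lt"], auto simp: Si_props)
    have w0: "w \<noteq> 0\<^sub>v (lr*lt)" using vw v0 by auto
    have "(Si *\<^sub>v v) \<bullet>c v = w \<bullet>c (Sig *\<^sub>v w)" unfolding w_def[symmetric] vw ..
    also have "\<dots> = cnj ((Sig *\<^sub>v w) \<bullet>c w)" using w by (subst cscalar_swap, auto)
    finally show ?thesis using Sig_pos[OF w w0] by simp
  qed
  ultimately show "0 < Re ((P *\<^sub>v v) \<bullet>c v)" using cs_real_nonneg[of "Sg *\<^sub>v v"] by simp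
qed

lemma P_det: "det P \<noteq> 0" by (rule herm_pd_det_nz[OF P_pd])

lemma A_props: "A \<in> carrier_mat (lr*lt) (lr*lt)" "P * A = 1\<^sub>m (lr*lt)" "A * P = 1\<^sub>m (lr*lt)"
  using minv_props[OF P_carrier P_det] unfolding A_def by auto
lemma A_carrier[simp]: "A \<in> carrier_mat (lr*lt) (lr*lt)" by (rule A_props(1))
lemma A_dims[simp]: "dim_row A = lr*lt" "dim_col A = lr*lt" by (rule carrier_matD[OF A_carrier])+
lemma A_herm: "mat_adjoint A = A"
  unfolding A_def by (rule minv_herm[OF P_carrier _ P_det], use P_pd in \<open>auto simp: herm_pd_def\<close>)

lemma Amat_eq: "Amat lr S Sig = A"
  unfolding Amat_def A_def P_def G_def Si_def Sg_def ..

definition "M = Sg * Sig * mat_adjoint Sg + 1\<^sub>m (lr*n)"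
definition "C f = Xg f * Sig * mat_adjoint (Xg f) + 1\<^sub>m (lr*n)"
definition "E f = Xg f * A * mat_adjoint (Xg f)"

lemma C_carrier[simp]: "C f \<in> carrier_mat (lr*n) (lr*n)" unfolding C_def by (intro carrier_matI) simp_all
lemma C_dims[simp]: "dim_row (C f) = lr*n" "dim_col (C f) = lr*n" by (rule carrier_matD[OF C_carrier])+
lemma E_carrier[simp]: "E f \<in> carrier_mat (lr*n) (lr*n)" unfolding E_def by (intro carrier_matI) simp_all
lemma E_dims[simp]: "dim_row (E f) = lr*n" "dim_col (E f) = lr*n" by (rule carrier_matD[OF E_carrier])+
lemma M_carrier[simp]: "M \<in> carrier_mat (lr*n) (lr*n)" unfolding M_def by (intro carrier_matI) simp_all
lemma M_dims[simp]: "dim_row M = lr*n" "dim_col M = lr*n" by (rule carrier_matD[OF M_carrier])+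

lemma key1: "Sig * (G * A) + A = Sig"
proof -
  have "Sig * (G * A) + A = Sig * (G * A) + Sig * (Si * A)"
    using Si_props(2) by (simp add: massoc[symmetric] mone_l)
  also have "\<dots> = Sig * (P * A)" unfolding P_def by (simp add: mdistr_l mdistr_r)
  also have "\<dots> = Sig" by (simp add: A_props mone_r)
  finally show ?thesis .
qed

lemma CE: "C f * E f = Xg f * Sig * mat_adjoint (Xg f)"
proof -
  let ?X = "Xg f" and ?Xa = "mat_adjoint (Xg f)"
  have "C f * E f = ?X * (Sig * ((?Xa * ?X) * (A * ?Xa))) + ?X * (A * ?Xa)"
    unfolding C_def E_def by (simp add: mdistr_r massoc mone_l)
  also have "\<dots> = ?X * ((Sig * (G * A) + A) * ?Xa)"
    unfolding XX by (simp add: mdistr_r mdistr_l massoc)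
  also have "\<dots> = ?X * Sig * ?Xa" unfolding key1 by (simp add: massoc)
  finally show ?thesis .
qed

lemma C_inv: "C f * (1\<^sub>m (lr*n) - E f) = 1\<^sub>m (lr*n)"
proof -
  have "C f * (1\<^sub>m (lr*n) - E f) = C f - C f * E f" by (simp add: mdistr_minus_l mone_r)
  also have "\<dots> = 1\<^sub>m (lr*n)" unfolding CE unfolding C_def
    by (rule eq_matI, auto)
  finally show ?thesis .
qed

lemma minv_C: "minv (C f) = 1\<^sub>m (lr*n) - E f"
proof -
  have "1\<^sub>m (lr*n) - E f \<in> carrier_mat (lr*n) (lr*n)" by (intro carrier_matI) simp_all
  from minv_unique[OF C_carrier this C_inv] show ?thesis .
qed

lemma C_eq: "C f = D f * M * mat_adjoint (D f)"
  unfolding C_def M_def Xg_eq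
  by (subst adj_mult, simp, simp add: mdistr_l mdistr_r massoc mone_r mone_l D_unitary)

lemma det_C: "det (C f) = det M"
proof -
  have Da: "mat_adjoint (D f) \<in> carrier_mat (lr*n) (lr*n)" by simp
  have "det (C f) = det (D f * M) * det (mat_adjoint (D f))"
    unfolding C_eq by (rule det_mult[of _ "lr*n"], intro carrier_matI, simp_all)
  also have "\<dots> = det M * (det (D f) * det (mat_adjoint (D f)))"
    by (subst det_mult[of _ "lr*n"], simp_all)
  also have "det (D f) * det (mat_adjoint (D f)) = 1"
    using det_mult[OF D_carrier Da, of f] D_unitary(2)[of f] by simp
  finally show ?thesis by simp
qed

lemma M_pd: "herm_pd (lr*n) M"
  unfolding herm_pd_def
proof (intro conjI ballI impI)
  show "M \<in> carrier_mat (lr*n) (lr*n)" by simp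
  show "mat_adjoint M = M" unfolding M_def
    by (subst adj_add[of _ "lr*n" "lr*n"], (intro carrier_matI, simp_all)[2],
        simp add: adj_mult Sig_herm massoc)
  fix v :: "complex vec" assume v: "v \<in> carrier_vec (lr*n)" and v0: "v \<noteq> 0\<^sub>v (lr*n)"
  define w where "w = mat_adjoint Sg *\<^sub>v v"
  have w: "w \<in> carrier_vec (lr*lt)" unfolding w_def by simp
  have dv: "dim_vec v = lr*n" using v by auto
  have "M *\<^sub>v v = (Sg * Sig * mat_adjoint Sg) *\<^sub>v v + 1\<^sub>m (lr*n) *\<^sub>v v" unfolding M_def
    by (rule add_mult_distrib_mat_vec[of _ "lr*n" "lr*n"]; (intro carrier_matI)?; simp add: v)
  also have "\<dots> = Sg *\<^sub>v (Sig *\<^sub>v w) + v" unfolding w_def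
    using dv by (simp add: mvassoc mvone)
  finally have "M *\<^sub>v v = Sg *\<^sub>v (Sig *\<^sub>v w) + v" .
  then have "(M *\<^sub>v v) \<bullet>c v = (Sg *\<^sub>v (Sig *\<^sub>v w)) \<bullet>c v + v \<bullet>c v"
    using v add_scalar_prod_distrib[of "Sg *\<^sub>v (Sig *\<^sub>v w)" "lr*n" v "conjugate v"] by simp
  also have "(Sg *\<^sub>v (Sig *\<^sub>v w)) \<bullet>c v = (Sig *\<^sub>v w) \<bullet>c w"
    unfolding w_def using v by (subst cscalar_adj[of _ "lr*n" "lr*lt"], simp_all)
  finally have "(M *\<^sub>v v) \<bullet>c v = (Sig *\<^sub>v w) \<bullet>c w + v \<bullet>c v" .
  moreover have "0 < Re (v \<bullet>c v)"
    using conjugate_square_greater_0_vec[of v "lr*n"] v v0 by (simp add: less_complex_def)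
  ultimately show "0 < Re ((M *\<^sub>v v) \<bullet>c v)" using Sig_nonneg[OF w] by simp
qed

lemma detM_pos: "Re (det M) > 0" by (rule det_herm_pd_pos[OF M_pd])

definition "z f = mat_adjoint (Xg f) *\<^sub>v y"
definition "u = G *\<^sub>v muh"
definition "bb = muh - A *\<^sub>v u"
definition "q f = Re ((minv (C f) *\<^sub>v (y - Xg f *\<^sub>v muh)) \<bullet>c (y - Xg f *\<^sub>v muh))"
definition "g0 f = 2 * Re (z f \<bullet>c bb) + Re ((A *\<^sub>v z f) \<bullet>c z f)"
definition "K0 = Re (y \<bullet>c y) + Re (muh \<bullet>c u) - Re ((A *\<^sub>v u) \<bullet>c u)"

lemma y_c[simp]: "y \<in> carrier_vec (lr*n)" by (rule y)
lemma muh_c[simp]: "muh \<in> carrier_vec (lr*lt)" by (rule muh)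
lemma z_c[simp]: "z f \<in> carrier_vec (lr*lt)" unfolding z_def by simp
lemma u_c[simp]: "u \<in> carrier_vec (lr*lt)" unfolding u_def by simp

lemma vdims[simp]: "dim_vec y = lr*n" "dim_vec muh = lr*lt" "dim_vec (z f) = lr*lt" "dim_vec u = lr*lt"
  using y_c muh_c z_c u_c by (auto simp only: carrier_vec_def mem_Collect_eq)

lemma q_eq: "q f = K0 - g0 f"
proof -
  let ?X = "Xg f" and ?Xa = "mat_adjoint (Xg f)"
  define r where "r = y - ?X *\<^sub>v muh"
  have r: "r \<in> carrier_vec (lr*n)" unfolding r_def by simp
  have dr: "dim_vec r = lr*n" using r by auto
  have dm: "dim_vec muh = lr*lt" using muh by auto
  have s1: "minv (C f) *\<^sub>v r = r - ?X *\<^sub>v (A *\<^sub>v (?Xa *\<^sub>v r))"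
    unfolding minv_C
    by (subst minus_mult_distrib_mat_vec[of _ "lr*n" "lr*n"], (simp_all add: r)[3],
        simp add: mvone mvassoc dr E_def)
  have s2: "(minv (C f) *\<^sub>v r) \<bullet>c r = r \<bullet>c r - (A *\<^sub>v (?Xa *\<^sub>v r)) \<bullet>c (?Xa *\<^sub>v r)"
    unfolding s1 using r
    by (subst cs_minus_left[of _ "lr*n"], simp_all, subst cscalar_adj[of _ "lr*n" "lr*lt"], simp_all)
  have s3: "?Xa *\<^sub>v r = z f - u"
    unfolding r_def z_def u_def
    by (subst mult_minus_distrib_mat_vec[of _ "lr*lt" "lr*n"], simp_all,
        simp add: mvassoc[symmetric] dm XX)
  have xm: "?X *\<^sub>v muh \<in> carrier_vec (lr*n)" by simp
  have s4: "r \<bullet>c r = y \<bullet>c y - cnj (muh \<bullet>c z f) - muh \<bullet>c z f + muh \<bullet>c u"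
  proof -
    have a1: "(?X *\<^sub>v muh) \<bullet>c y = muh \<bullet>c z f" unfolding z_def
      by (rule cscalar_adj[of _ "lr*n" "lr*lt"], simp_all)
    have a2: "y \<bullet>c (?X *\<^sub>v muh) = cnj (muh \<bullet>c z f)"
      unfolding a1[symmetric] by (rule cscalar_swap, simp)
    have a3: "(?X *\<^sub>v muh) \<bullet>c (?X *\<^sub>v muh) = muh \<bullet>c u"
      unfolding u_def
      by (subst cscalar_adj[of _ "lr*n" "lr*lt"], simp_all, simp add: mvassoc[symmetric] dm XX)
    show ?thesis unfolding r_def
      by (simp add: cs_minus_left[of _ "lr*n"] cs_minus_right[of _ "lr*n"] a1 a2 a3 xm)
  qed
  have s5: "(A *\<^sub>v (z f - u)) \<bullet>c (z f - u) = (A *\<^sub>v z f) \<bullet>c z f - cnj ((A *\<^sub>v u) \<bullet>c z f) - (A *\<^sub>v u) \<bullet>c z f + (A *\<^sub>v u) \<bullet>c u"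
  proof -
    have b1: "(A *\<^sub>v z f) \<bullet>c u = cnj ((A *\<^sub>v u) \<bullet>c z f)"
      by (subst cscalar_adj[of _ "lr*lt" "lr*lt"], simp_all add: A_herm, subst cscalar_swap, simp_all)
    have "A *\<^sub>v (z f - u) = A *\<^sub>v z f - A *\<^sub>v u"
      by (rule mult_minus_distrib_mat_vec[of _ "lr*lt" "lr*lt"], simp_all)
    then show ?thesis
      by (simp add: cs_minus_left[of _ "lr*lt"] cs_minus_right[of _ "lr*lt"] b1)
  qed
  have s6: "z f \<bullet>c bb = cnj (muh \<bullet>c z f) - cnj ((A *\<^sub>v u) \<bullet>c z f)"
    unfolding bb_def
    by (subst cs_minus_right[of _ "lr*lt"], simp_all, subst (1 2) cscalar_swap, simp_all)
  show ?thesis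
    unfolding q_def r_def[symmetric] s2 s3 s4 s5 g0_def K0_def s6 by simp
qed

lemma bvec_eq: "bvec lr S muh Sig f = bb"
proof -
  have "bvec lr S muh Sig f = (1\<^sub>m (lr*lt) - A * G) *\<^sub>v muh"
    unfolding bvec_def Let_def Xg_def[symmetric] XX Amat_eq using S by simp
  also have "\<dots> = 1\<^sub>m (lr*lt) *\<^sub>v muh - (A * G) *\<^sub>v muh"
    by (rule minus_mult_distrib_mat_vec[of _ "lr*lt" "lr*lt"]; (intro carrier_matI)?; simp)
  also have "\<dots> = muh - A *\<^sub>v u" unfolding u_def
    by (simp add: mvone mvassoc)
  finally show ?thesis unfolding bb_def .
qed

lemma bvec_eq2: "bvec lr S muh Sig f = (1\<^sub>m (lr * lt) - Amat lr S Sig * (mat_adjoint (blkdiag lr S) * blkdiag lr S)) *\<^sub>v muh"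
  unfolding bvec_def Let_def Xg_def[symmetric] XX G_def Sg_def using S by simp

lemma gfun_eq: "gfun lr S muh Sig tau muf y f = g0 f - tau / 2 * \<bar>f - muf\<bar>\<^sup>2"
  unfolding gfun_def Let_def Xg_def[symmetric] z_def[symmetric] bvec_eq Amat_eq g0_def ..

lemma lik_eq: "lik lr S muh Sig y f = exp (g0 f - K0) / (pi ^ (lr*n) * Re (det M))"
proof -
  have "lik lr S muh Sig y f = exp (- q f) / (pi ^ (lr*n) * Re (det (C f)))"
    unfolding lik_def Let_def Xg_def[symmetric] cn_density_def q_def C_def using S by simp
  then show ?thesis unfolding det_C q_eq by simp
qed

end

lemma argmax_cong: assumes c: "c > 0" and F: "\<And>f. F f = c * exp (h f)"
  shows "argmax_set F = argmax_set h"
  unfolding argmax_set_def F using c by simp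

theorem theorem1:
  fixes lt lr n :: nat and S Sig :: "complex mat" and muh y :: "complex vec"
    and muf sigf :: real
  assumes "lt \<ge> 1" "lr \<ge> 1" "n \<ge> 1"
    and "S \<in> carrier_mat n lt"
    and "herm_pd (lr * lt) Sig"
    and "muh \<in> carrier_vec (lr * lt)"
    and "sigf > 0"
    and "y \<in> carrier_vec (lr * n)"
  shows
    "argmax_set (\<lambda>f. lik lr S muh Sig y f * normal_pdf muf sigf f)
       = argmax_set (gfun lr S muh Sig (1 / sigf\<^sup>2) muf y)
     \<and> (\<forall>f. bvec lr S muh Sig f
           = (1\<^sub>m (lr * lt) - Amat lr S Sig * (mat_adjoint (blkdiag lr S) * blkdiag lr S)) *\<^sub>v muh)
     \<and> (let rho = (\<Sum>i<lt. (mat_adjoint S * S) $$ (i,i)) / of_nat n in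
         mat_adjoint S * S = (of_nat n * rho / of_nat lt) \<cdot>\<^sub>m 1\<^sub>m lt \<longrightarrow>
         Amat lr S Sig = minv (minv Sig + (of_nat n * rho / of_nat lt) \<cdot>\<^sub>m 1\<^sub>m (lr * lt)))
     \<and> argmax_set (lik lr S muh Sig y) = argmax_set (gfun lr S muh Sig 0 muf y)"
proof -
  interpret mimo lt lr n S Sig muh y
    by (unfold_locales, use assms in auto)
  define Kd where "Kd = pi ^ (lr*n) * Re (det M)"
  have Kd: "Kd > 0" unfolding Kd_def using detM_pos by simp
  have c1: "argmax_set (\<lambda>f. lik lr S muh Sig y f * normal_pdf muf sigf f)
       = argmax_set (gfun lr S muh Sig (1 / sigf\<^sup>2) muf y)"
  proof (rule argmax_cong)
    show "exp (- K0) / Kd * (1 / sqrt (2 * pi * sigf\<^sup>2)) > 0" using Kd assms(7) by simp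
    fix f
    have "lik lr S muh Sig y f * normal_pdf muf sigf f =
      exp (g0 f - K0) / Kd * (1 / sqrt (2 * pi * sigf\<^sup>2) * exp (-(f - muf)\<^sup>2 / (2 * sigf\<^sup>2)))"
      unfolding lik_eq normal_pdf_def Kd_def ..
    also have "\<dots> = exp (- K0) / Kd * (1 / sqrt (2 * pi * sigf\<^sup>2)) * exp (g0 f - (1 / sigf\<^sup>2) / 2 * \<bar>f - muf\<bar>\<^sup>2)"
      by (simp add: exp_diff exp_add[symmetric] exp_minus field_simps)
    finally show "lik lr S muh Sig y f * normal_pdf muf sigf f =
      exp (- K0) / Kd * (1 / sqrt (2 * pi * sigf\<^sup>2)) * exp (gfun lr S muh Sig (1 / sigf\<^sup>2) muf y f)"
      unfolding gfun_eq .
  qed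
  have c4: "argmax_set (lik lr S muh Sig y) = argmax_set (gfun lr S muh Sig 0 muf y)"
  proof (rule argmax_cong)
    show "exp (- K0) / Kd > 0" using Kd by simp
    fix f
    show "lik lr S muh Sig y f = exp (- K0) / Kd * exp (gfun lr S muh Sig 0 muf y f)"
      unfolding lik_eq gfun_eq Kd_def by (simp add: exp_diff exp_minus field_simps)
  qed
  have c3: "Amat lr S Sig = minv (minv Sig + c \<cdot>\<^sub>m 1\<^sub>m (lr * lt))"
    if h: "mat_adjoint S * S = c \<cdot>\<^sub>m 1\<^sub>m lt" for c
  proof -
    have "mat_adjoint (blkdiag lr S) * blkdiag lr S = c \<cdot>\<^sub>m 1\<^sub>m (lr * lt)"
      unfolding blkdiag_adj using assms(4)
      by (subst blkdiag_mult, simp, simp add: h blkdiag_smult blkdiag_one)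
    then show ?thesis unfolding Amat_def
      by (subst comm_add_mat[of _ "lr*lt" "lr*lt"], simp, use Si_carrier in \<open>simp add: Si_def\<close>, simp)
  qed
  show ?thesis using c1 c4 c3 bvec_eq2 by (simp add: Let_def)
qed

end
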